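(* Consider binary-payoff, perfect-news collective choice problems (as in the context) with a fixed number $n$ of voters, each described by $(P_W,v)$ with $v=(v_w,v_\ell)$. (a) If two such problems have the same $P_W$ and payoffs $v,v'$ with $v_\ell/v_w\ge v'_\ell/v'_w$, then $(P_W,v)\succeq_{AC}(P_W,v')$. (b) If two such problems have the same payoffs $v$ and winner distributions $P_W,P'_W$ with $P_W\succeq_{LR}P'_W$, then $(P'_W,v)\succeq_{AC}(P_W,v)$.
   Context: Setting: $n\ge3$ odd, $\tau=(n-1)/2$, voters $1,\dots,n$ vote for $p^*$ or $p_*$, a policy wins iff it gets more than $\tau$ votes. A state $\omega$ specifies each voter's payoff difference $V_i^d$ between $p^*$ and $p_*$ and a signal $s_i\in\mathcal S=\{s^0,\dots,s^K\}$ privately observed by $i$ ($\mathcal M=\{s^1,\dots,s^K\}$ informative); $P$ is the probability on states. Standing assumptions: $P$ invariant under permutations of voters; if $s_i=s^0$ then $s_i$ is independent of $(V,S_{-i})$; for $s_i\ne s^0$, $E[V_i^d\mid S=s]>0$ iff $E[V_i^d\mid S_i=s_i]>0$; conditional expectations of $V_i^d$ given non-null events are nonzero; $P(B\ge1)>0$ and $P(G\ge\tau)>0$, where $G$ ($B$) counts voters whose signal $s^k$ is good news, $E[V_i^d\mid S_i=s^k]>0$ (bad news, $<0$). Binary payoffs: $V_i^d\in\{v_w,-v_\ell\}$ with $v_w,v_\ell>0$; $W_i=\{V_i^d>0\}$ (voter $i$ is a winner), $W$ = number of winners, $P_W$ the distribution of $W$ on $\{0,\dots,n\}$; $p^*$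 is ex ante optimal: $P(W_i)v_w-(1-P(W_i))v_\ell>0$. Perfect news: $P(W_i\mid S_i=s^k)\in\{0,1\}$ for every informative $s^k$. Then the problem is represented by $(P_W,v)$, and $V^G(\kappa\mid P_W,v)=E[V_i^d\mid G=\kappa,B=0,S_i=s^0]$ depends only on $(P_W,v)$. The polarization ratio is $v_\ell/v_w$. $(P_W,v)\succeq_{AC}(P'_W,v')$ ("more adversely correlated") means: for every $\kappa\in\{1,\dots,\tau\}$, $V^G(\kappa\mid P'_W,v')<0$ implies $V^G(\kappa\mid P_W,v)<0$. $P'_W\succeq_{LR}P_W$ (likelihood-ratio dominance) means $P'_W(w')P_W(w)\ge P'_W(w)P_W(w')$ whenever $w'>w$. *)

theory Defs
  imports "HOL-Probability.Probability"
begin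

text \<open>Binary-payoff, perfect-news collective choice problems with n voters, represented
  by (P_W, v) where P_W is the distribution of the number W of winners on {0..n}
  and v = (v_w, v_l).  tau = (n-1)/2.\<close>

definition tau :: "nat \<Rightarrow> nat" where
  "tau n = (n - 1) div 2"

text \<open>Standing assumptions, expressed in terms of (P_W, v):
  P_W is supported on {0..n}; v_w, v_l > 0; p^* is ex ante optimal,
  P(W_i) v_w - (1 - P(W_i)) v_l > 0 with P(W_i) = E[W]/n (exchangeability);
  P(G >= tau) > 0 (which under perfect news forces P(W >= tau) > 0);
  P(B >= 1) > 0 (which forces P(W < n) > 0).\<close>

definition bp_problem :: "nat \<Rightarrow> nat pmf \<Rightarrow> real \<Rightarrow> real \<Rightarrow> bool" where
  "bp_problem n PW vw vl \<longleftrightarrow>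
     set_pmf PW \<subseteq> {..n} \<and> 0 < vw \<and> 0 < vl \<and>
     (measure_pmf.expectation PW real / real n) * vw
       - (1 - measure_pmf.expectation PW real / real n) * vl > 0 \<and>
     measure_pmf.prob PW {tau n..} > 0 \<and>
     measure_pmf.prob PW {..<n} > 0"

text \<open>V^G(kappa | P_W, v) = E[V_i^d | G = kappa, B = 0, S_i = s^0].
  Null signals are independent of everything (probability q each), and under
  perfect news informed voters reveal their winner status. Conditional on W = w,
  the event {S_i = s^0, G = kappa, B = 0} together with W_i has probability
  (w/n) C(w-1,kappa) q^(n-kappa) (1-q)^kappa (voter i a winner) and
  ((n-w)/n) C(w,kappa) q^(n-kappa) (1-q)^kappa (voter i a loser); the common
  factor cancels in the conditional expectation, giving the formula below.\<close>

definition VG :: "nat \<Rightarrow> nat pmf \<Rightarrow> real \<Rightarrow> real \<Rightarrow> nat \<Rightarrow> real" where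
  "VG n PW vw vl \<kappa> =
     (\<Sum>w\<le>n. pmf PW w * (real w * real ((w - 1) choose \<kappa>) * vw
                          - real (n - w) * real (w choose \<kappa>) * vl))
     / (\<Sum>w\<le>n. pmf PW w * (real w * real ((w - 1) choose \<kappa>)
                          + real (n - w) * real (w choose \<kappa>)))"

definition more_adv_corr ::
  "nat \<Rightarrow> nat pmf \<Rightarrow> real \<Rightarrow> real \<Rightarrow> nat pmf \<Rightarrow> real \<Rightarrow> real \<Rightarrow> bool" where
  "more_adv_corr n PW vw vl PW' vw' vl' \<longleftrightarrow>
     (\<forall>\<kappa>\<in>{1..tau n}. VG n PW' vw' vl' \<kappa> < 0 \<longrightarrow> VG n PW vw vl \<kappa> < 0)"

definition lr_dom :: "nat pmf \<Rightarrow> nat pmf \<Rightarrow> bool" where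
  "lr_dom P' P \<longleftrightarrow>
     (\<forall>w w'. w' > w \<longrightarrow> pmf P' w' * pmf P w \<ge> pmf P' w * pmf P w')"

end

theory Submission
  imports Defs
begin

definition Num :: "nat \<Rightarrow> nat pmf \<Rightarrow> real \<Rightarrow> real \<Rightarrow> nat \<Rightarrow> real" where
  "Num n PW vw vl \<kappa> = (\<Sum>w\<le>n. pmf PW w * (real w * real ((w - 1) choose \<kappa>) * vw
                          - real (n - w) * real (w choose \<kappa>) * vl))"
definition Den :: "nat \<Rightarrow> nat pmf \<Rightarrow> nat \<Rightarrow> real" where
  "Den n PW \<kappa> = (\<Sum>w\<le>n. pmf PW w * (real w * real ((w - 1) choose \<kappa>)
                          + real (n - w) * real (w choose \<kappa>)))"

lemma Den_nonneg: "Den n PW \<kappa> \<ge> 0"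
  unfolding Den_def by (intro sum_nonneg mult_nonneg_nonneg) auto

lemma VG_neg: "VG n PW vw vl \<kappa> < 0 \<longleftrightarrow> Num n PW vw vl \<kappa> < 0 \<and> Den n PW \<kappa> > 0"
proof -
  have "VG n PW vw vl \<kappa> = Num n PW vw vl \<kappa> / Den n PW \<kappa>"
    unfolding VG_def Num_def Den_def ..
  then show ?thesis using Den_nonneg[of n PW \<kappa>]
    by (auto simp: divide_less_0_iff)
qed

lemma Num_split: "Num n PW vw vl \<kappa> =
   vw * (\<Sum>w\<le>n. pmf PW w * (real w * real ((w - 1) choose \<kappa>)))
 - vl * (\<Sum>w\<le>n. pmf PW w * (real (n - w) * real (w choose \<kappa>)))"
  unfolding Num_def by (simp add: sum_distrib_left sum_subtractf[symmetric] algebra_simps)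

lemma choose_id:
  assumes "\<kappa> \<ge> 1"
  shows "real w * real ((w - 1) choose \<kappa>) = (real w - real \<kappa>) * real (w choose \<kappa>)"
proof (cases "\<kappa> \<le> w")
  case True
  have "(w - \<kappa>) * (w choose \<kappa>) = w * ((w - 1) choose \<kappa>)"
    by (rule binomial_absorb_comp)
  then have "real (w - \<kappa>) * real (w choose \<kappa>) = real w * real ((w - 1) choose \<kappa>)"
    by (metis of_nat_mult)
  then show ?thesis using True by (simp add: of_nat_diff)
next
  case False
  then have "w - 1 < \<kappa>" using assms by auto
  then show ?thesis using False by (simp add: binomial_eq_0)
qed

lemma Num_eq:
  assumes "\<kappa> \<ge> 1"
  shows "Num n PW vw vl \<kappa> = (\<Sum>w\<le>n. pmf PW w * real (w choose \<kappa>) *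
            ((real w - real \<kappa>) * vw - (real n - real w) * vl))"
  unfolding Num_def
proof (intro sum.cong refl)
  fix w assume "w \<in> {..n}"
  then show "pmf PW w * (real w * real ((w - 1) choose \<kappa>) * vw
                          - real (n - w) * real (w choose \<kappa>) * vl) =
     pmf PW w * real (w choose \<kappa>) *
            ((real w - real \<kappa>) * vw - (real n - real w) * vl)"
    unfolding choose_id[OF assms, of w] by (simp add: of_nat_diff algebra_simps)
qed

lemma Den_eq:
  assumes "\<kappa> \<ge> 1"
  shows "Den n PW \<kappa> = (real n - real \<kappa>) * (\<Sum>w\<le>n. pmf PW w * real (w choose \<kappa>))"
  unfolding Den_def sum_distrib_left
proof (intro sum.cong refl)
  fix w assume "w \<in> {..n}"
  then show "pmf PW w * (real w * real ((w - 1) choose \<kappa>)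
                          + real (n - w) * real (w choose \<kappa>)) =
     (real n - real \<kappa>) * (pmf PW w * real (w choose \<kappa>))"
    unfolding choose_id[OF assms, of w] by (simp add: of_nat_diff algebra_simps)
qed

lemma part_a:
  assumes "vw > 0" "vl > 0" "vw' > 0" "vl' > 0" "vl' / vw' \<le> vl / vw"
    and "VG n PW vw' vl' \<kappa> < 0"
  shows "VG n PW vw vl \<kappa> < 0"
proof -
  define A where "A = (\<Sum>w\<le>n. pmf PW w * (real w * real ((w - 1) choose \<kappa>)))"
  define B where "B = (\<Sum>w\<le>n. pmf PW w * (real (n - w) * real (w choose \<kappa>)))"
  have A0: "A \<ge> 0" unfolding A_def by (intro sum_nonneg mult_nonneg_nonneg) auto
  have B0: "B \<ge> 0" unfolding B_def by (intro sum_nonneg mult_nonneg_nonneg) auto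
  from assms(6) have h1: "vw' * A - vl' * B < 0" "Den n PW \<kappa> > 0"
    unfolding VG_neg Num_split A_def B_def by auto
  have r: "vl' * vw \<le> vl * vw'" using assms(1-5) by (simp add: field_simps)
  have "vw * (vw' * A) < vw * (vl' * B)" using h1 assms(1) by simp
  also have "\<dots> = (vl' * vw) * B" by simp
  also have "\<dots> \<le> (vl * vw') * B" using r B0 by (rule mult_right_mono)
  finally have "vw' * (vw * A - vl * B) < 0" by (simp add: algebra_simps)
  then have "vw * A - vl * B < 0" using assms(3) by (simp add: mult_less_0_iff)
  then show ?thesis unfolding VG_neg Num_split A_def[symmetric] B_def[symmetric]
    using h1(2) by simp
qed

lemma lr_key:
  fixes q q' h :: "nat \<Rightarrow> real"
  assumes lr: "\<And>w w'. w' < w \<Longrightarrow> q w * q' w' \<ge> q w' * q' w"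
    and mono: "\<And>w w'. w' \<le> w \<Longrightarrow> h w' \<le> h w"
  shows "(\<Sum>w\<le>n. \<Sum>w'\<le>n. q w * q' w' * (h w - h w')) \<ge> 0"
proof -
  define F where "F w w' = q w * q' w' * (h w - h w')" for w w'
  have sw: "(\<Sum>w\<le>n. \<Sum>w'\<le>n. F w w') = (\<Sum>w\<le>n. \<Sum>w'\<le>n. F w' w)"
    by (rule sum.swap)
  have t: "F w w' + F w' w \<ge> 0" for w w'
  proof -
    have e: "F w w' + F w' w = (q w * q' w' - q w' * q' w) * (h w - h w')"
      unfolding F_def by (simp add: algebra_simps)
    consider "w' < w" | "w < w'" | "w = w'" by linarith
    then show ?thesis
    proof cases
      case 1
      then show ?thesis unfolding e using lr[OF 1] mono[of w' w]
        by (intro mult_nonneg_nonneg) auto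
    next
      case 2
      then have "q w' * q' w \<ge> q w * q' w'" "h w \<le> h w'" using lr[OF 2] mono[of w w'] by auto
      then show ?thesis unfolding e by (intro mult_nonpos_nonpos) auto
    qed (simp add: F_def)
  qed
  have "2 * (\<Sum>w\<le>n. \<Sum>w'\<le>n. F w w') = (\<Sum>w\<le>n. \<Sum>w'\<le>n. F w w' + F w' w)"
    using sw by (simp add: sum.distrib)
  also have "\<dots> \<ge> 0" using t by (intro sum_nonneg) auto
  finally show ?thesis unfolding F_def by simp
qed

lemma part_b:
  assumes "vw > 0" "vl > 0" "1 \<le> \<kappa>" "\<kappa> < n"
    and lr: "lr_dom PW PW'"
    and pos: "measure_pmf.prob PW' {tau n..} > 0" "set_pmf PW' \<subseteq> {..n}"
    and tk: "\<kappa> \<le> tau n"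
    and neg: "VG n PW vw vl \<kappa> < 0"
  shows "VG n PW' vw vl \<kappa> < 0"
proof -
  define c where "c w = real (w choose \<kappa>)" for w
  define h where "h w = (real w - real \<kappa>) * vw - (real n - real w) * vl" for w
  define q where "q w = pmf PW w * c w" for w
  define q' where "q' w = pmf PW' w * c w" for w
  define S where "S = (\<Sum>w\<le>n. q w * h w)"
  define S' where "S' = (\<Sum>w\<le>n. q' w * h w)"
  define Q where "Q = (\<Sum>w\<le>n. q w)"
  define Q' where "Q' = (\<Sum>w\<le>n. q' w)"
  have NumS: "Num n P vw vl \<kappa> = (\<Sum>w\<le>n. pmf P w * c w * h w)" for P
    unfolding Num_eq[OF assms(3)] c_def h_def ..
  have DenQ: "Den n P \<kappa> = (real n - real \<kappa>) * (\<Sum>w\<le>n. pmf P w * c w)" for P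
    unfolding Den_eq[OF assms(3)] c_def ..
  have nk: "real n - real \<kappa> > 0" using assms(4) by simp
  from neg have S0: "S < 0" and Q0: "Q > 0"
    unfolding VG_neg NumS DenQ S_def Q_def q_def using nk by (auto simp: zero_less_mult_iff)
  have "measure_pmf.prob PW' {tau n..} \<noteq> 0" using pos(1) by simp
  then obtain w0 where w0: "w0 \<in> set_pmf PW'" "w0 \<ge> tau n"
    unfolding measure_pmf_zero_iff by auto
  have w0n: "w0 \<le> n" using w0 pos(2) by auto
  have p0: "pmf PW' w0 > 0" using w0(1) by (simp add: pmf_positive)
  have "c w0 > 0" unfolding c_def using w0(2) tk by simp
  then have "q' w0 > 0" unfolding q'_def using p0 by simp
  moreover have "\<forall>w\<in>{..n}. q' w \<ge> 0" unfolding q'_def c_def by auto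
  ultimately have Q'0: "Q' > 0" unfolding Q'_def using w0n
    by (metis atMost_iff finite_atMost sum_pos2)
  have lr': "q w * q' w' \<ge> q w' * q' w" if "w' < w" for w w'
  proof -
    have "pmf PW w * pmf PW' w' \<ge> pmf PW w' * pmf PW' w"
      using lr that unfolding lr_dom_def by auto
    then have "(pmf PW w * pmf PW' w') * (c w * c w') \<ge> (pmf PW w' * pmf PW' w) * (c w * c w')"
      by (rule mult_right_mono) (auto simp: c_def)
    then show ?thesis unfolding q_def q'_def by (simp add: algebra_simps)
  qed
  have mono: "h w' \<le> h w" if "w' \<le> w" for w w'
    unfolding h_def using that assms(1,2)
    by (intro diff_mono mult_right_mono) auto
  have key: "(\<Sum>w\<le>n. \<Sum>w'\<le>n. q w * q' w' * (h w - h w')) \<ge> 0"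
    by (rule lr_key[OF lr' mono])
  have "(\<Sum>w\<le>n. \<Sum>w'\<le>n. q w * q' w' * (h w - h w'))
      = (\<Sum>w\<le>n. \<Sum>w'\<le>n. (q w * h w) * q' w' - q w * (q' w' * h w'))"
    by (intro sum.cong refl) (simp add: algebra_simps)
  also have "\<dots> = (\<Sum>w\<le>n. \<Sum>w'\<le>n. (q w * h w) * q' w') - (\<Sum>w\<le>n. \<Sum>w'\<le>n. q w * (q' w' * h w'))"
    by (simp only: sum_subtractf)
  also have "\<dots> = S * Q' - Q * S'"
    unfolding S_def Q'_def Q_def S'_def sum_product ..
  finally have "(\<Sum>w\<le>n. \<Sum>w'\<le>n. q w * q' w' * (h w - h w')) = S * Q' - Q * S'" .
  with key have "Q * S' \<le> S * Q'" by simp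
  also have "S * Q' < 0" using S0 Q'0 by (simp add: mult_neg_pos)
  finally have "S' < 0" using Q0 by (simp add: mult_less_0_iff)
  then show ?thesis unfolding VG_neg NumS DenQ using nk Q'0
    unfolding S'_def Q'_def q'_def by simp
qed

theorem proposition3:
  fixes n :: nat
  assumes "odd n" and "n \<ge> 3"
  shows "(\<forall>PW vw vl vw' vl'. bp_problem n PW vw vl \<and> bp_problem n PW vw' vl'
            \<and> vl / vw \<ge> vl' / vw'
            \<longrightarrow> more_adv_corr n PW vw vl PW vw' vl')
       \<and> (\<forall>PW PW' vw vl. bp_problem n PW vw vl \<and> bp_problem n PW' vw vl
            \<and> lr_dom PW PW'
            \<longrightarrow> more_adv_corr n PW' vw vl PW vw vl)"
proof (intro conjI allI impI)
  fix PW vw vl vw' vl'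
  assume h: "bp_problem n PW vw vl \<and> bp_problem n PW vw' vl' \<and> vl / vw \<ge> vl' / vw'"
  then show "more_adv_corr n PW vw vl PW vw' vl'"
    unfolding more_adv_corr_def
  proof (intro ballI impI)
    fix \<kappa> assume "VG n PW vw' vl' \<kappa> < 0"
    moreover have "vw > 0" "vl > 0" "vw' > 0" "vl' > 0" using h unfolding bp_problem_def by auto
    ultimately show "VG n PW vw vl \<kappa> < 0" using h by (intro part_a[of vw vl vw' vl']) auto
  qed
next
  fix PW PW' vw vl
  assume h: "bp_problem n PW vw vl \<and> bp_problem n PW' vw vl \<and> lr_dom PW PW'"
  have tn: "tau n < n" unfolding tau_def using assms by simp
  show "more_adv_corr n PW' vw vl PW vw vl"
    unfolding more_adv_corr_def
  proof (intro ballI impI)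
    fix \<kappa> assume k: "\<kappa> \<in> {1..tau n}" and neg: "VG n PW vw vl \<kappa> < 0"
    show "VG n PW' vw vl \<kappa> < 0"
    proof (rule part_b[where PW=PW])
      show "vw > 0" "vl > 0" "measure_pmf.prob PW' {tau n..} > 0" "set_pmf PW' \<subseteq> {..n}"
        using h unfolding bp_problem_def by auto
      show "1 \<le> \<kappa>" "\<kappa> \<le> tau n" using k by auto
      show "\<kappa> < n" using k tn by auto
      show "lr_dom PW PW'" using h by auto
      show "VG n PW vw vl \<kappa> < 0" by (rule neg)
    qed
  qed
qed

end
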